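(* Let $m\neq n$ be nonzero integers and let $\varphi:Q(m,n)\to E(m,n)$ be the isomorphism defined below. Let $\sigma:Q(m,n)\to E(m,n)$ be the morphism extending $(X_0:X_1:X_2:X_3)\mapsto\bigl(X_0^2/X_1^2,\ X_0X_2X_3/X_1^3\bigr)$ (sending points with $X_1=0$ to the point at infinity). Then $\sigma(S)=-2\varphi(S)$ for every point $S$ of $Q(m,n)$, where $-2$ denotes the negative of the doubling map in the group law of $E(m,n)$. In particular, in the case $m=-n$, the morphism $\tau$ extending $(X_0:X_1:X_2:X_3)\mapsto\bigl(X_0^2/X_1^2,\ -X_0X_2X_3/X_1^3\bigr)$ satisfies $\tau(S)=2\varphi(S)$ for every point $S$ of $Q(-n,n)$.
   Context: $Q(m,n)\subset\mathbb{P}^3$ is the curve $X_0^2+mX_1^2=X_2^2,\ X_0^2+nX_1^2=X_3^2$ and $E(m,n)$ is the elliptic curve $y^2=x(x+m)(x+n)$ (projectively $Y^2T=X(X+mT)(X+nT)$ with coordinates $(T:X:Y)$), with neutral element the point at infinity. $\varphi:Q(m,n)\to E(m,n)$ is the isomorphism of curves extending the rational map $(X_0:X_1:X_2:X_3)\mapsto\bigl(nX_2-mX_3+(m-n)X_0\ :\ mn(X_3-X_2)\ :\ mn(m-n)X_1\bigr)$ (in coordinates $(T:X:Y)$). *)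

theory Defs
  imports Main
begin

datatype 'a ecpt = Inf | Aff 'a 'a

definition on_E :: "int \<Rightarrow> int \<Rightarrow> 'a::field_char_0 ecpt \<Rightarrow> bool" where
  "on_E m n P = (case P of Inf \<Rightarrow> True
     | Aff x y \<Rightarrow> y^2 = x * (x + of_int m) * (x + of_int n))"

text \<open>Group law on E(m,n) (Weierstrass form y^2 = x^3 + a2 x^2 + a4 x, a2 = m+n, a4 = mn):
  the standard chord-and-tangent addition.\<close>
definition ec_add :: "int \<Rightarrow> int \<Rightarrow> 'a::field_char_0 ecpt \<Rightarrow> 'a ecpt \<Rightarrow> 'a ecpt" where
  "ec_add m n P Q = (case P of Inf \<Rightarrow> Q | Aff x1 y1 \<Rightarrow>
     (case Q of Inf \<Rightarrow> P | Aff x2 y2 \<Rightarrow>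
       (if x1 = x2 \<and> y1 = - y2 then Inf
        else (let a2 = of_int m + of_int n; a4 = of_int m * of_int n;
                  l = (if x1 = x2 then (3 * x1^2 + 2 * a2 * x1 + a4) / (2 * y1)
                       else (y2 - y1) / (x2 - x1));
                  x3 = l^2 - a2 - x1 - x2
              in Aff x3 (- (y1 + l * (x3 - x1)))))))"

definition ec_neg :: "'a::field_char_0 ecpt \<Rightarrow> 'a ecpt" where
  "ec_neg P = (case P of Inf \<Rightarrow> Inf | Aff x y \<Rightarrow> Aff x (- y))"

text \<open>Points of Q(m,n) in P^3, given by a nonzero representative (X0,X1,X2,X3).\<close>
definition on_Q :: "int \<Rightarrow> int \<Rightarrow> 'a::field_char_0 \<times> 'a \<times> 'a \<times> 'a \<Rightarrow> bool" where
  "on_Q m n S = (case S of (X0, X1, X2, X3) \<Rightarrow>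
     (X0, X1, X2, X3) \<noteq> (0, 0, 0, 0) \<and>
     X0^2 + of_int m * X1^2 = X2^2 \<and> X0^2 + of_int n * X1^2 = X3^2)"

text \<open>A projective point (T:X:Y) of E as an element of ecpt (T = 0 on E forces X = 0, i.e. Inf).\<close>
definition proj_to_E :: "'a::field_char_0 \<times> 'a \<times> 'a \<Rightarrow> 'a ecpt" where
  "proj_to_E P = (case P of (T, X, Y) \<Rightarrow> if T = 0 then Inf else Aff (X / T) (Y / T))"

text \<open>The defining triple vanishes only at the point
  (1:0:1:1) (for m,n nonzero and distinct); there the morphism extending the rational map
  takes the value Inf (the limit along the curve).\<close>
definition phi :: "int \<Rightarrow> int \<Rightarrow> 'a::field_char_0 \<times> 'a \<times> 'a \<times> 'a \<Rightarrow> 'a ecpt" where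
  "phi m n S = (case S of (X0, X1, X2, X3) \<Rightarrow>
     (let mm = of_int m; nn = of_int n;
          T = nn * X2 - mm * X3 + (mm - nn) * X0;
          X = mm * nn * (X3 - X2);
          Y = mm * nn * (mm - nn) * X1
      in if (T, X, Y) = (0, 0, 0) then Inf else proj_to_E (T, X, Y)))"

definition sigma :: "'a::field_char_0 \<times> 'a \<times> 'a \<times> 'a \<Rightarrow> 'a ecpt" where
  "sigma S = (case S of (X0, X1, X2, X3) \<Rightarrow>
     if X1 = 0 then Inf else Aff (X0^2 / X1^2) (X0 * X2 * X3 / X1^3))"

definition tau :: "'a::field_char_0 \<times> 'a \<times> 'a \<times> 'a \<Rightarrow> 'a ecpt" where
  "tau S = (case S of (X0, X1, X2, X3) \<Rightarrow>
     if X1 = 0 then Inf else Aff (X0^2 / X1^2) (- (X0 * X2 * X3 / X1^3)))"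

end

theory Submission
  imports Defs
begin

lemma curve_id: fixes X0 X1 X2 X3 m n :: "'a::field_char_0"
  assumes h1: "X0^2 + m*X1^2 = X2^2" and h2: "X0^2 + n*X1^2 = X3^2"
  shows "(m*n*(m-n)*X1)^2 * (n*X2 - m*X3 + (m-n)*X0) = (m*n*(X3-X2)) * (m*n*(X3-X2) + m*(n*X2 - m*X3 + (m-n)*X0)) * (m*n*(X3-X2) + n*(n*X2 - m*X3 + (m-n)*X0))"
  using assms by algebra

lemma slope_id: fixes X0 X1 X2 X3 m n :: "'a::field_char_0"
  assumes h1: "X0^2 + m*X1^2 = X2^2" and h2: "X0^2 + n*X1^2 = X3^2"
  shows "(3*(m*n*(X3-X2))^2 + 2*(m+n)*(m*n*(X3-X2))*(n*X2 - m*X3 + (m-n)*X0) + m*n*(n*X2 - m*X3 + (m-n)*X0)^2)*X1 = - 2*(m*n*(m-n)*X1)*(n*X2 - m*X3 + (m-n)*X0)*(X0+X2+X3)"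
  using assms by algebra

lemma x_id: fixes X0 X1 X2 X3 m n :: "'a::field_char_0"
  assumes h1: "X0^2 + m*X1^2 = X2^2" and h2: "X0^2 + n*X1^2 = X3^2"
  shows "(X0+X2+X3)^2*(n*X2 - m*X3 + (m-n)*X0) - (m+n)*X1^2*(n*X2 - m*X3 + (m-n)*X0) - 2*(m*n*(X3-X2))*X1^2 = X0^2*(n*X2 - m*X3 + (m-n)*X0)"
  using assms by algebra

lemma y_id: fixes X0 X1 X2 X3 m n :: "'a::field_char_0"
  assumes h1: "X0^2 + m*X1^2 = X2^2" and h2: "X0^2 + n*X1^2 = X3^2"
  shows "(m*n*(m-n)*X1)*X1^3 - (X0+X2+X3)*(X0^2*(n*X2 - m*X3 + (m-n)*X0) - (m*n*(X3-X2))*X1^2) = X0*X2*X3*(n*X2 - m*X3 + (m-n)*X0)"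
  using assms by algebra

lemma double_zero: "ec_add m n (Aff x (0::'a::field_char_0)) (Aff x 0) = Inf"
  by (simp add: ec_add_def)

lemma sigma_part:
  fixes m n :: int and X0 X1 X2 X3 :: "'a::field_char_0"
  assumes "m \<noteq> 0" and "n \<noteq> 0" and "m \<noteq> n"
    and Q: "on_Q m n (X0, X1, X2, X3)"
  shows "sigma (X0, X1, X2, X3) = ec_neg (ec_add m n (phi m n (X0, X1, X2, X3)) (phi m n (X0, X1, X2, X3)))"
proof -
  define mm :: 'a where "mm = of_int m"
  define nn :: 'a where "nn = of_int n"
  have mm0: "mm \<noteq> 0" and nn0: "nn \<noteq> 0" and mn: "mm \<noteq> nn"
    using assms(1-3) by (auto simp: mm_def nn_def)
  have h1: "X0^2 + mm*X1^2 = X2^2" and h2: "X0^2 + nn*X1^2 = X3^2"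
    using Q by (auto simp: on_Q_def mm_def nn_def)
  define T where "T = nn * X2 - mm * X3 + (mm - nn) * X0"
  define X where "X = mm * nn * (X3 - X2)"
  define Y where "Y = mm * nn * (mm - nn) * X1"
  have phiS: "phi m n (X0, X1, X2, X3) = (if (T, X, Y) = (0, 0, 0) then Inf else proj_to_E (T, X, Y))"
    by (simp only: phi_def T_def X_def Y_def mm_def nn_def Let_def prod.case)
  show ?thesis
  proof (cases "X1 = 0")
    case True
    then have "Y = 0" by (simp add: Y_def)
    then have "phi m n (X0, X1, X2, X3) = Inf \<or> (\<exists>x. phi m n (X0, X1, X2, X3) = Aff x 0)"
      by (auto simp: phiS proj_to_E_def)
    then show ?thesis using True
      by (auto simp: sigma_def ec_neg_def double_zero) (simp add: ec_add_def)
  next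
    case False
    have cur: "Y^2 * T = X * (X + mm*T) * (X + nn*T)"
      unfolding T_def X_def Y_def using curve_id[OF h1 h2] by simp
    have Y0: "Y \<noteq> 0" using False mm0 nn0 mn by (simp add: Y_def)
    have T0: "T \<noteq> 0"
    proof
      assume T: "T = 0"
      then have "X^3 = 0" using cur by (simp add: power3_eq_cube)
      then have "X = 0" by simp
      then have "X3 = X2" using mm0 nn0 by (simp add: X_def)
      with T have "(mm - nn) * (X0 - X2) = 0" by (simp add: T_def algebra_simps)
      then have "X0 = X2" using mn by simp
      with h1 have "mm * X1^2 = 0" by simp
      with mm0 False show False by simp
    qed
    define x where "x = X / T"
    define y where "y = Y / T"
    have phiA: "phi m n (X0, X1, X2, X3) = Aff x y"
      using T0 by (simp add: phiS proj_to_E_def x_def y_def)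
    have y0: "y \<noteq> 0" using Y0 T0 by (simp add: y_def)
    have ny: "\<not> (y = - y)" using y0 by (metis add_eq_0_iff2 mult_2 mult_eq_0_iff zero_neq_numeral)
    define L where "L = - (X0 + X2 + X3) / X1"
    have lL: "(3 * x^2 + 2 * (mm + nn) * x + mm * nn) / (2 * y) = L"
    proof -
      have e: "(3*X^2 + 2*(mm+nn)*X*T + mm*nn*T^2)*X1 = - 2*Y*T*(X0+X2+X3)"
        unfolding T_def X_def Y_def using slope_id[OF h1 h2] by simp
      show ?thesis unfolding L_def x_def y_def using T0 Y0 False e
        by (simp add: field_simps power2_eq_square) (use e in algebra)
    qed
    define x3 where "x3 = L^2 - (mm + nn) - x - x"
    have x3v: "x3 = X0^2 / X1^2"
    proof -
      have e: "(X0+X2+X3)^2*T - (mm+nn)*X1^2*T - 2*X*X1^2 = X0^2*T"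
        unfolding T_def X_def using x_id[OF h1 h2] by simp
      show ?thesis unfolding x3_def L_def x_def using T0 False e
        by (simp add: field_simps power2_eq_square)
    qed
    have y3v: "y + L * (x3 - x) = X0 * X2 * X3 / X1^3"
    proof -
      have e: "Y*X1^3 - (X0+X2+X3)*(X0^2*T - X*X1^2) = X0*X2*X3*T"
        unfolding T_def X_def Y_def using y_id[OF h1 h2] by simp
      show ?thesis unfolding x3v L_def x_def y_def using T0 False e
        by (simp add: field_simps power2_eq_square power3_eq_cube)
    qed
    have "ec_add m n (Aff x y) (Aff x y) = Aff x3 (- (y + L * (x3 - x)))"
      using ny by (simp only: ec_add_def ecpt.case Let_def flip: mm_def nn_def) (simp only: simp_thms if_True if_False ny lL, simp add: x3_def)
    then have "ec_add m n (Aff x y) (Aff x y) = Aff (X0^2 / X1^2) (- (X0 * X2 * X3 / X1^3))"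
      unfolding y3v[symmetric] x3v[symmetric] .
    then show ?thesis using False
      by (simp add: phiA sigma_def ec_neg_def)
  qed
qed

theorem mainTheorem4:
  fixes m n :: int
  assumes "m \<noteq> 0" and "n \<noteq> 0" and "m \<noteq> n"
  shows "(\<forall>S :: 'a::field_char_0 \<times> 'a \<times> 'a \<times> 'a. on_Q m n S \<longrightarrow>
            sigma S = ec_neg (ec_add m n (phi m n S) (phi m n S)))
       \<and> (m = - n \<longrightarrow> (\<forall>S :: 'a \<times> 'a \<times> 'a \<times> 'a. on_Q m n S \<longrightarrow>
            tau S = ec_add m n (phi m n S) (phi m n S)))"
proof -
  have A: "\<forall>S :: 'a \<times> 'a \<times> 'a \<times> 'a. on_Q m n S \<longrightarrow>
            sigma S = ec_neg (ec_add m n (phi m n S) (phi m n S))"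
    using sigma_part[OF assms] by auto
  have nn: "\<And>P :: 'a ecpt. ec_neg (ec_neg P) = P"
    by (simp add: ec_neg_def split: ecpt.split)
  have ts: "\<And>S :: 'a \<times> 'a \<times> 'a \<times> 'a. tau S = ec_neg (sigma S)"
    by (auto simp: tau_def sigma_def ec_neg_def)
  have "\<forall>S :: 'a \<times> 'a \<times> 'a \<times> 'a. on_Q m n S \<longrightarrow>
            tau S = ec_add m n (phi m n S) (phi m n S)"
    using A ts nn by metis
  with A show ?thesis by blast
qed

end
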